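(* Let $\lambda$ be an infinite cardinal, let $\mathbb T$ be the unit circle group with its usual topology, and let $\tau_B$ be the topology on the Brandt semigroup $B_\lambda(\mathbb T)$ defined as follows: for a non-zero point $(\alpha,x,\beta)$ a base of neighbourhoods is $\{(\alpha,U,\beta):U$ a neighbourhood of $x$ in $\mathbb T\}$, where $(\alpha,U,\beta)=\{(\alpha,u,\beta):u\in U\}$; a base of neighbourhoods of $0$ consists of the sets $B_\lambda(\mathbb T)\setminus\big(\mathbb T_{\alpha_1,\beta_1}\cup\dots\cup\mathbb T_{\alpha_n,\beta_n}\cup\{(\alpha,x_j,\beta):\alpha,\beta\in\lambda,\ j=1,\dots,k\}\big)$ with $n,k\in\mathbb N$, $\alpha_1,\beta_1,\dots,\alpha_n,\beta_n\in\lambda$, $x_1,\dots,x_k\in\mathbb T$, where $\mathbb T_{\alpha,\beta}=\{(\alpha,x,\beta):x\in\mathbb T\}$. Then the space $(B_\lambda(\mathbb T),\tau_B)$ is countably pracompact if and only if $\lambda\le\mathfrak c$.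
   Context: For a group $G$ and cardinal $\lambda$, $B_\lambda(G)=(\lambda\times G\times\lambda)\cup\{0\}$ with $(\alpha,a,\beta)(\gamma,b,\delta)=(\alpha,ab,\delta)$ if $\beta=\gamma$ and $0$ otherwise. A space $X$ is countably pracompact if there is a dense set $A\subseteq X$ such that every infinite subset of $A$ has an accumulation point in $X$. $\mathfrak c$ is the cardinality of the continuum. *)

theory Defs
  imports "HOL-Analysis.Analysis"
begin

definition circle :: "complex set" where
  "circle = sphere 0 1"

text \<open>Brandt semigroup B_lambda(T) over the index set L: None is the zero,
  Some (a, x, b) is the triple (a, x, b).\<close>
definition brandt_carrier :: "'l set \<Rightarrow> ('l \<times> complex \<times> 'l) option set" where
  "brandt_carrier L = insert None (Some ` (L \<times> circle \<times> L))"

definition brandt_mult ::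
  "('l \<times> complex \<times> 'l) option \<Rightarrow> ('l \<times> complex \<times> 'l) option \<Rightarrow> ('l \<times> complex \<times> 'l) option" where
  "brandt_mult p q = (case (p, q) of
     (Some (a, x, b), Some (c, y, d)) \<Rightarrow> (if b = c then Some (a, x * y, d) else None)
   | _ \<Rightarrow> None)"

definition brandt_nz_nbhds :: "'l set \<Rightarrow> ('l \<times> complex \<times> 'l) option set set" where
  "brandt_nz_nbhds L = {{Some (a, u, b) | u. u \<in> U} | a U b.
      a \<in> L \<and> b \<in> L \<and> openin (top_of_set circle) U}"

definition brandt_zero_nbhds :: "'l set \<Rightarrow> ('l \<times> complex \<times> 'l) option set set" where
  "brandt_zero_nbhds L = {brandt_carrier L -
      ({Some (a, x, b) | a x b. (a, b) \<in> F \<and> x \<in> circle}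
       \<union> {Some (a, x, b) | a x b. a \<in> L \<and> b \<in> L \<and> x \<in> S}) | F S.
      finite F \<and> F \<subseteq> L \<times> L \<and> finite S \<and> S \<subseteq> circle}"

definition brandt_topology :: "'l set \<Rightarrow> ('l \<times> complex \<times> 'l) option topology" where
  "brandt_topology L = topology_generated_by (brandt_nz_nbhds L \<union> brandt_zero_nbhds L)"

definition countably_pracompact :: "'a topology \<Rightarrow> bool" where
  "countably_pracompact X \<longleftrightarrow>
     (\<exists>A. A \<subseteq> topspace X \<and> X closure_of A = topspace X \<and>
        (\<forall>B. B \<subseteq> A \<and> infinite B \<longrightarrow> (\<exists>x \<in> topspace X. x \<in> X derived_set_of B)))"

end

theory Submission
  imports Defs
begin

definition Zs :: "'l set \<Rightarrow> ('l \<times> 'l) set \<Rightarrow> complex set \<Rightarrow> ('l \<times> complex \<times> 'l) option set" where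
  "Zs L F S = brandt_carrier L -
      ({Some (a, x, b) | a x b. (a, b) \<in> F \<and> x \<in> circle}
       \<union> {Some (a, x, b) | a x b. a \<in> L \<and> b \<in> L \<and> x \<in> S})"

definition cellset :: "'l \<Rightarrow> 'l \<Rightarrow> complex set \<Rightarrow> ('l \<times> complex \<times> 'l) option set" where
  "cellset a b W = {Some (a, u, b) | u. u \<in> W}"

lemma zero_nbhds_eq: "brandt_zero_nbhds L = {Zs L F S | F S. finite F \<and> F \<subseteq> L \<times> L \<and> finite S \<and> S \<subseteq> circle}"
  unfolding brandt_zero_nbhds_def Zs_def by simp

lemma nz_nbhds_eq: "brandt_nz_nbhds L = {cellset a b U | a U b. a \<in> L \<and> b \<in> L \<and> openin (top_of_set circle) U}"
  unfolding brandt_nz_nbhds_def cellset_def by simp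

lemma Zs_mono: "F \<subseteq> F' \<Longrightarrow> S \<subseteq> S' \<Longrightarrow> Zs L F' S' \<subseteq> Zs L F S"
  unfolding Zs_def by blast

lemma None_Zs: "None \<in> Zs L F S"
  unfolding Zs_def brandt_carrier_def by auto

lemma open_circle_diff: "finite S \<Longrightarrow> openin (top_of_set circle) (circle - S)"
  by (metis closedin_closed_Int finite_imp_closed openin_diff openin_topspace topspace_euclidean_subtopology inf_commute Diff_Int2 Int_absorb)

lemma nbhd_lemma:
  assumes "generate_topology_on (brandt_nz_nbhds L \<union> brandt_zero_nbhds L) U" "p \<in> U"
  shows "(p = None \<longrightarrow> (\<exists>F S. finite F \<and> F \<subseteq> L\<times>L \<and> finite S \<and> S \<subseteq> circle \<and> Zs L F S \<subseteq> U))
       \<and> (\<forall>a y b. p = Some (a,y,b) \<longrightarrow> (\<exists>W. openin (top_of_set circle) W \<and> y \<in> W \<and> cellset a b W \<subseteq> U))"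
  using assms
proof (induction arbitrary: p rule: generate_topology_on.induct)
  case Empty
  then show ?case by simp
next
  case (Int A B)
  have 1: ?case if "p = None"
  proof -
    have hA: "\<exists>F S. finite F \<and> F \<subseteq> L\<times>L \<and> finite S \<and> S \<subseteq> circle \<and> Zs L F S \<subseteq> A"
      using Int.IH(1)[OF IntD1[OF Int.prems]] that by blast
    have hB: "\<exists>F S. finite F \<and> F \<subseteq> L\<times>L \<and> finite S \<and> S \<subseteq> circle \<and> Zs L F S \<subseteq> B"
      using Int.IH(2)[OF IntD2[OF Int.prems]] that by blast
    from hA hB obtain F1 S1 F2 S2 where "finite F1" "F1 \<subseteq> L\<times>L" "finite S1" "S1 \<subseteq> circle" "Zs L F1 S1 \<subseteq> A"
      "finite F2" "F2 \<subseteq> L\<times>L" "finite S2" "S2 \<subseteq> circle" "Zs L F2 S2 \<subseteq> B" by blast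
    then have "Zs L (F1 \<union> F2) (S1 \<union> S2) \<subseteq> A \<inter> B"
      using Zs_mono[of F1 "F1 \<union> F2" S1 "S1 \<union> S2" L] Zs_mono[of F2 "F1 \<union> F2" S2 "S1 \<union> S2" L] by blast
    then show ?thesis using that \<open>finite F1\<close> \<open>finite F2\<close> \<open>finite S1\<close> \<open>finite S2\<close> \<open>F1 \<subseteq> L\<times>L\<close> \<open>F2 \<subseteq> L\<times>L\<close> \<open>S1 \<subseteq> circle\<close> \<open>S2 \<subseteq> circle\<close>
      by (intro conjI impI exI[of _ "F1 \<union> F2"] exI[of _ "S1 \<union> S2"]) auto
  qed
  have 2: "\<exists>W. openin (top_of_set circle) W \<and> y \<in> W \<and> cellset a b W \<subseteq> A \<inter> B" if "p = Some (a,y,b)" for a y b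
  proof -
    have hA: "\<exists>W. openin (top_of_set circle) W \<and> y \<in> W \<and> cellset a b W \<subseteq> A"
      using Int.IH(1)[OF IntD1[OF Int.prems]] that by blast
    have hB: "\<exists>W. openin (top_of_set circle) W \<and> y \<in> W \<and> cellset a b W \<subseteq> B"
      using Int.IH(2)[OF IntD2[OF Int.prems]] that by blast
    from hA hB obtain W1 W2 where "openin (top_of_set circle) W1" "y \<in> W1" "cellset a b W1 \<subseteq> A"
      "openin (top_of_set circle) W2" "y \<in> W2" "cellset a b W2 \<subseteq> B" by blast
    then show ?thesis
      by (intro exI[of _ "W1 \<inter> W2"]) (auto simp: cellset_def openin_Int)
  qed
  show ?case using 1 2 by auto
next
  case (UN K)
  then obtain k where k: "k \<in> K" "p \<in> k" by blast
  note h = UN.IH[OF k]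
  have sub: "k \<subseteq> \<Union>K" using k(1) by blast
  show ?case
  proof (intro conjI allI impI)
    assume "p = None"
    then obtain F S where "finite F" "F \<subseteq> L\<times>L" "finite S" "S \<subseteq> circle" "Zs L F S \<subseteq> k"
      using h by blast
    then show "\<exists>F S. finite F \<and> F \<subseteq> L\<times>L \<and> finite S \<and> S \<subseteq> circle \<and> Zs L F S \<subseteq> \<Union>K"
      using sub by (intro exI[of _ F] exI[of _ S]) blast
  next
    fix a y b assume "p = Some (a,y,b)"
    then obtain W where "openin (top_of_set circle) W" "y \<in> W" "cellset a b W \<subseteq> k"
      using h by blast
    then show "\<exists>W. openin (top_of_set circle) W \<and> y \<in> W \<and> cellset a b W \<subseteq> \<Union>K"
      using sub by (intro exI[of _ W]) blast
  qed
next
  case (Basis s)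
  then consider (nz) "s \<in> brandt_nz_nbhds L" | (z) "s \<in> brandt_zero_nbhds L" by blast
  then show ?case
  proof cases
    case nz
    then obtain a b U where s: "s = cellset a b U" "openin (top_of_set circle) U"
      unfolding nz_nbhds_eq by blast
    show ?thesis using Basis.prems s by (auto simp: cellset_def)
  next
    case z
    then obtain F S where s: "s = Zs L F S" "finite F" "F \<subseteq> L\<times>L" "finite S" "S \<subseteq> circle"
      unfolding zero_nbhds_eq by blast
    have "\<exists>W. openin (top_of_set circle) W \<and> y \<in> W \<and> cellset a b W \<subseteq> s" if "p = Some (a,y,b)" for a y b
    proof (intro exI[of _ "circle - S"] conjI)
      show "openin (top_of_set circle) (circle - S)" using s open_circle_diff by blast
      show "y \<in> circle - S" "cellset a b (circle - S) \<subseteq> s"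
        using Basis.prems that s unfolding Zs_def cellset_def brandt_carrier_def by auto
    qed
    then show ?thesis using s by blast
  qed
qed


unbundle cardinal_syntax

lemma topspace_bt: "topspace (brandt_topology L) = brandt_carrier L"
proof -
  have "Zs L {} {} = brandt_carrier L" unfolding Zs_def by auto
  then have "brandt_carrier L \<in> brandt_zero_nbhds L" unfolding zero_nbhds_eq by force
  moreover have "s \<subseteq> brandt_carrier L" if "s \<in> brandt_nz_nbhds L \<union> brandt_zero_nbhds L" for s
    using that unfolding nz_nbhds_eq zero_nbhds_eq
    by (auto simp: cellset_def Zs_def brandt_carrier_def dest!: openin_subset)
  ultimately show ?thesis unfolding brandt_topology_def topology_generated_by_topspace by blast
qed

lemma open_Zs: "finite F \<Longrightarrow> F \<subseteq> L\<times>L \<Longrightarrow> finite S \<Longrightarrow> S \<subseteq> circle \<Longrightarrow> openin (brandt_topology L) (Zs L F S)"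
  unfolding brandt_topology_def by (rule topology_generated_by_Basis) (auto simp: zero_nbhds_eq)

lemma open_cell: "a \<in> L \<Longrightarrow> b \<in> L \<Longrightarrow> openin (top_of_set circle) W \<Longrightarrow> openin (brandt_topology L) (cellset a b W)"
  unfolding brandt_topology_def by (rule topology_generated_by_Basis) (auto simp: nz_nbhds_eq)

lemma open_nbhd:
  assumes "openin (brandt_topology L) U" "p \<in> U"
  shows "(p = None \<longrightarrow> (\<exists>F S. finite F \<and> F \<subseteq> L\<times>L \<and> finite S \<and> S \<subseteq> circle \<and> Zs L F S \<subseteq> U))
       \<and> (\<forall>a y b. p = Some (a,y,b) \<longrightarrow> (\<exists>W. openin (top_of_set circle) W \<and> y \<in> W \<and> cellset a b W \<subseteq> U))"
  using nbhd_lemma[OF assms(1)[unfolded brandt_topology_def openin_topology_generated_by_iff] assms(2)] .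

lemma one_circle: "1 \<in> circle" by (simp add: circle_def)

lemma circle_to_real: "|circle| \<le>o |UNIV :: real set|"
proof -
  have "inj_on Arg circle"
  proof (rule inj_onI)
    fix z w assume "z \<in> circle" "w \<in> circle" "Arg z = Arg w"
    then show "z = w" using rcis_cmod_Arg[of z] rcis_cmod_Arg[of w] by (simp add: circle_def)
  qed
  then show ?thesis using card_of_ordLeq by blast
qed

lemma nat_to_real: "|UNIV :: nat set| \<le>o |UNIV :: real set|"
  using infinite_iff_card_of_nat infinite_UNIV_char_0 by blast

lemma times_to_real: "|A| \<le>o |UNIV :: real set| \<Longrightarrow> |B| \<le>o |UNIV :: real set| \<Longrightarrow> |A \<times> B| \<le>o |UNIV :: real set|"
  by (rule card_of_Times_ordLeq_infinite_Field) (auto simp: card_of_Card_order infinite_UNIV_char_0 Field_card_of card_of_card_order_on)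

lemma forward:
  assumes cp: "countably_pracompact (brandt_topology L)"
  shows "\<exists>f :: 'l \<Rightarrow> real. inj_on f L"
proof -
  from cp obtain A where A: "A \<subseteq> brandt_carrier L" "brandt_topology L closure_of A = brandt_carrier L"
    "\<And>B. B \<subseteq> A \<Longrightarrow> infinite B \<Longrightarrow> \<exists>x \<in> brandt_carrier L. x \<in> brandt_topology L derived_set_of B"
    unfolding countably_pracompact_def topspace_bt by blast
  have ex: "\<exists>x. x \<in> circle \<and> Some (a,x,a) \<in> A" if "a \<in> L" for a
  proof -
    have "Some (a,1,a) \<in> brandt_topology L closure_of A" using A(2) that one_circle
      by (simp add: brandt_carrier_def)
    moreover have "openin (brandt_topology L) (cellset a a circle)"
      using open_cell that by (metis openin_topspace topspace_euclidean_subtopology)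
    moreover have "Some (a,1,a) \<in> cellset a a circle" using one_circle by (simp add: cellset_def)
    ultimately obtain y where "y \<in> A" "y \<in> cellset a a circle" unfolding closure_of_def by blast
    then show ?thesis unfolding cellset_def by blast
  qed
  define g where "g a = (SOME x. x \<in> circle \<and> Some (a,x,a) \<in> A)" for a
  have g: "g a \<in> circle" "Some (a, g a, a) \<in> A" if "a \<in> L" for a
    using someI_ex[OF ex[OF that]] unfolding g_def by auto
  define fib where "fib x = {a \<in> L. g a = x}" for x
  have finfib: "finite (fib x)" for x
  proof (rule ccontr)
    assume inf: "infinite (fib x)"
    define B where "B = (\<lambda>a. Some (a,x,a)) ` fib x"
    have "inj_on (\<lambda>a. Some (a,x,a)) (fib x)" by (auto intro: inj_onI)
    then have "infinite B" using inf B_def finite_imageD by blast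
    moreover have "B \<subseteq> A" using g unfolding B_def fib_def by auto
    ultimately obtain p where p: "p \<in> brandt_carrier L" "p \<in> brandt_topology L derived_set_of B"
      using A(3) by blast
    show False
    proof (cases p)
      case None
      have xc: "x \<in> circle" using inf g unfolding fib_def by (metis (mono_tags, lifting) empty_Collect_eq finite.emptyI)
      have "openin (brandt_topology L) (Zs L {} {x})" using open_Zs[of "{}" L "{x}"] xc by auto
      moreover have "p \<in> Zs L {} {x}" using None None_Zs by simp
      ultimately obtain y where "y \<in> B" "y \<in> Zs L {} {x}" using p(2) unfolding derived_set_of_def by blast
      then show False unfolding B_def fib_def Zs_def by auto
    next
      case (Some t)
      then obtain a y0 b where pt: "p = Some (a,y0,b)" by (metis prod_cases3)
      with p(1) have abc: "a \<in> L" "b \<in> L" "y0 \<in> circle" unfolding brandt_carrier_def by auto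
      have "openin (brandt_topology L) (cellset a b (circle - ({x} - {y0})))"
        using open_cell[OF abc(1) abc(2) open_circle_diff[of "{x} - {y0}"]] by simp
      moreover have "p \<in> cellset a b (circle - ({x} - {y0}))" using pt abc by (auto simp: cellset_def)
      ultimately obtain q where "q \<noteq> p" "q \<in> B" "q \<in> cellset a b (circle - ({x} - {y0}))"
        using p(2) unfolding derived_set_of_def by blast
      then show False using pt unfolding B_def cellset_def by auto
    qed
  qed
  define h where "h a = (g a, to_nat_on (fib (g a)) a)" for a
  have "inj_on h L"
  proof (rule inj_onI)
    fix a a' assume "a \<in> L" "a' \<in> L" "h a = h a'"
    then have "g a = g a'" "to_nat_on (fib (g a)) a = to_nat_on (fib (g a)) a'" unfolding h_def by auto
    moreover have "a \<in> fib (g a)" "a' \<in> fib (g a)" using \<open>a \<in> L\<close> \<open>a' \<in> L\<close> \<open>g a = g a'\<close> unfolding fib_def by auto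
    ultimately show "a = a'" using inj_on_to_nat_on[OF countable_finite[OF finfib]] by (meson inj_onD)
  qed
  moreover have "h ` L \<subseteq> circle \<times> UNIV" using g unfolding h_def by auto
  ultimately have "|L| \<le>o |circle \<times> (UNIV :: nat set)|" using card_of_ordLeq by blast
  also have "|circle \<times> (UNIV :: nat set)| \<le>o |UNIV :: real set|"
    using times_to_real circle_to_real nat_to_real by blast
  finally have "|L| \<le>o |UNIV :: real set|" .
  then obtain f :: "'l \<Rightarrow> real" where "inj_on f L" using card_of_ordLeq[of L "UNIV :: real set"] by blast
  then show ?thesis by blast
qed


definition ecirc :: "real \<Rightarrow> complex" where "ecirc t = cis (2 * pi * t)"

lemma ecirc_in: "ecirc t \<in> circle" by (simp add: ecirc_def circle_def)

lemma cont_ecirc: "continuous_on UNIV ecirc"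
  unfolding ecirc_def cis_conv_exp by (intro continuous_intros)

lemma ecirc_eq: "ecirc s = ecirc u \<Longrightarrow> s - u \<in> \<rat>"
proof -
  assume "ecirc s = ecirc u"
  then have "exp (\<i> * complex_of_real (2 * pi * s)) = exp (\<i> * complex_of_real (2 * pi * u))"
    by (simp add: ecirc_def cis_conv_exp)
  then obtain n :: int where "\<i> * complex_of_real (2 * pi * s) = \<i> * complex_of_real (2 * pi * u) + (of_int (2 * n) * pi) * \<i>"
    using exp_eq by blast
  then have "Im (\<i> * complex_of_real (2 * pi * s)) = Im (\<i> * complex_of_real (2 * pi * u) + (of_int (2 * n) * pi) * \<i>)" by simp
  then have "2 * pi * s = 2 * pi * u + 2 * n * pi" by simp
  then have "(2 * pi) * s = (2 * pi) * (u + n)" by (simp add: algebra_simps)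
  then have "s = u + n" using pi_gt_zero by simp
  then show ?thesis by simp
qed

lemma ecirc_surj: "z \<in> circle \<Longrightarrow> ecirc (Arg z / (2*pi)) = z"
  using rcis_cmod_Arg[of z] by (simp add: ecirc_def circle_def rcis_def)

definition cls :: "real \<Rightarrow> real set" where "cls t = {s. s - t \<in> \<rat>}"

lemma cls_countable: "countable (cls t)"
proof -
  have "cls t = (\<lambda>q. q + t) ` \<rat>" unfolding cls_def by (auto simp: image_iff intro!: bexI[where x="_ - t"])
  then show ?thesis using countable_rat by (metis countable_image)
qed

lemma cls_eq: "s \<in> cls t1 \<Longrightarrow> s' \<in> cls t2 \<Longrightarrow> s - s' \<in> \<rat> \<Longrightarrow> cls t1 = cls t2"
proof -
  assume a: "s \<in> cls t1" "s' \<in> cls t2" "s - s' \<in> \<rat>"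
  then have "t1 - t2 \<in> \<rat>"
  proof -
    have "t1 - t2 = (s - s') - (s - t1) + (s' - t2)" by simp
    then show ?thesis using a unfolding cls_def by (metis Rats_add Rats_diff mem_Collect_eq)
  qed
  then show ?thesis unfolding cls_def
    by (auto, metis Rats_add diff_add_cancel add_diff_eq, metis Rats_diff diff_diff_eq2 add_diff_eq diff_add_cancel)
qed

lemma cls_dense: "open G \<Longrightarrow> G \<noteq> {} \<Longrightarrow> cls t \<inter> G \<noteq> {}"
proof -
  assume "open G" "G \<noteq> {}"
  then obtain x e where "x \<in> G" "e > 0" "ball x e \<subseteq> G" by (meson ex_in_conv open_contains_ball)
  obtain r where "r \<in> \<rat>" "x - t < r" "r < x - t + e" using Rats_dense_in_real[of "x - t" "x - t + e"] \<open>e > 0\<close> by auto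
  then have "r + t \<in> ball x e" by (simp add: dist_real_def)
  moreover have "r + t \<in> cls t" using \<open>r \<in> \<rat>\<close> by (simp add: cls_def)
  ultimately show ?thesis using \<open>ball x e \<subseteq> G\<close> by blast
qed

lemma card_real_cls: "|UNIV :: real set| \<le>o |range cls|"
proof -
  have U: "(\<Union>C \<in> range cls. C) = UNIV" unfolding cls_def by auto
  have inf: "infinite (range cls)"
  proof
    assume "finite (range cls)"
    then have "countable (\<Union>C \<in> range cls. C)" using cls_countable countable_finite by (intro countable_UN) auto
    then show False using U uncountable_UNIV_real by metis
  qed
  have L1: "|C| \<le>o |range cls|" if "C \<in> range cls" for C
  proof -
    have "countable C" using that cls_countable by auto
    then have "|C| \<le>o |UNIV :: nat set|" using card_of_ordLeq[of C "UNIV :: nat set", THEN iffD1] inj_on_to_nat_on by auto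
    moreover have "|UNIV :: nat set| \<le>o |range cls|" using iffD1[OF infinite_iff_card_of_nat inf] .
    ultimately show ?thesis by (rule ordLeq_transitive)
  qed
  have L0: "|range cls| \<le>o |range cls|" using card_of_mono1[of "range cls" "range cls"] by simp
  have "|\<Union>C \<in> range cls. C| \<le>o |range cls|"
    by (rule card_of_UNION_ordLeq_infinite[OF inf L0]) (use L1 in simp)
  then show ?thesis using U by simp
qed

lemma disjoint_dense:
  fixes f :: "'l \<Rightarrow> real"
  assumes "inj_on f L"
  shows "\<exists>D. (\<forall>p \<in> L\<times>L. D p \<subseteq> circle \<and> (\<forall>W. openin (top_of_set circle) W \<and> W \<noteq> {} \<longrightarrow> D p \<inter> W \<noteq> {}))
            \<and> (\<forall>p \<in> L\<times>L. \<forall>q \<in> L\<times>L. \<forall>x. x \<in> D p \<and> x \<in> D q \<longrightarrow> p = q)"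
proof -
  have "|L| \<le>o |UNIV :: real set|" using assms card_of_ordLeq by blast
  then have "|L \<times> L| \<le>o |UNIV :: real set|" using times_to_real by blast
  then have "|L \<times> L| \<le>o |range cls|" using card_real_cls ordLeq_transitive by blast
  then obtain h where h: "inj_on h (L\<times>L)" "h ` (L\<times>L) \<subseteq> range cls" using card_of_ordLeq by metis
  define D where "D p = ecirc ` h p" for p
  have dense: "D p \<inter> W \<noteq> {}" if P: "p \<in> L\<times>L" "openin (top_of_set circle) W" "W \<noteq> {}" for p W
  proof -
    have "h p \<in> range cls" using subsetD[OF h(2) imageI[OF P(1)]] .
    then obtain t where t: "h p = cls t" by (metis rangeE)
    obtain V where V: "open V" "W = circle \<inter> V" using P(2) by (auto simp: openin_open)
    obtain z where z: "z \<in> W" using P(3) by blast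
    have "open (ecirc -` V)" using open_vimage[OF V(1) cont_ecirc] .
    moreover have "Arg z / (2*pi) \<in> ecirc -` V" using z V ecirc_surj by auto
    ultimately obtain s where "s \<in> cls t" "s \<in> ecirc -` V" using cls_dense by blast
    then have "ecirc s \<in> D p \<inter> W" using t V ecirc_in unfolding D_def by auto
    then show ?thesis by blast
  qed
  have disj: "p = q" if P: "p \<in> L\<times>L" "q \<in> L\<times>L" "x \<in> D p" "x \<in> D q" for p q x
  proof -
    obtain s s' where s: "s \<in> h p" "s' \<in> h q" "ecirc s = ecirc s'" using P(3,4) unfolding D_def by auto
    have "h p \<in> range cls" "h q \<in> range cls" using subsetD[OF h(2) imageI[OF P(1)]] subsetD[OF h(2) imageI[OF P(2)]] by auto
    then obtain t1 t2 where t: "h p = cls t1" "h q = cls t2" by (metis rangeE)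
    have "cls t1 = cls t2" using cls_eq s t ecirc_eq by metis
    then show ?thesis using h(1) t P(1,2) by (metis inj_onD)
  qed
  have sub: "D p \<subseteq> circle" for p unfolding D_def using ecirc_in by auto
  show ?thesis
  proof (rule exI[of _ D], intro conjI ballI allI impI)
    fix p assume "p \<in> L\<times>L"
    show "D p \<subseteq> circle" by (rule sub)
  next
    fix p W assume "p \<in> L\<times>L" "openin (top_of_set circle) W \<and> W \<noteq> {}"
    then show "D p \<inter> W \<noteq> {}" using dense by simp
  next
    fix p q x assume pq: "p \<in> L\<times>L" "q \<in> L\<times>L" "x \<in> D p \<and> x \<in> D q"
    show "p = q" using disj[OF pq(1) pq(2) conjunct1[OF pq(3)] conjunct2[OF pq(3)]] .
  qed
qed


lemma infinite_circle: "infinite circle"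
proof
  assume "finite circle"
  then have "finite (Re ` circle)" by simp
  moreover have "{-1..1::real} \<subseteq> Re ` circle"
  proof
    fix r :: real assume r: "r \<in> {-1..1}"
    then have "r\<^sup>2 \<le> 1" by (simp add: abs_square_le_1 abs_le_iff)
    then have "(sqrt (1 - r\<^sup>2))\<^sup>2 = 1 - r\<^sup>2" by simp
    then have "cmod (Complex r (sqrt (1 - r\<^sup>2))) = 1" unfolding cmod_def by simp
    then have "Complex r (sqrt (1 - r\<^sup>2)) \<in> circle" by (simp add: circle_def)
    then show "r \<in> Re ` circle" by (metis complex.sel(1) image_eqI)
  qed
  ultimately have "finite {-1..1::real}" using finite_subset by blast
  then show False using infinite_Icc[of "-1::real" 1] by simp
qed

lemma backward:
  fixes f :: "'l \<Rightarrow> real"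
  assumes infL: "infinite L" and inj: "inj_on f L"
  shows "countably_pracompact (brandt_topology L)"
proof -
  from disjoint_dense[OF inj] obtain D where
    DD: "(\<forall>p \<in> L\<times>L. D p \<subseteq> circle \<and> (\<forall>W. openin (top_of_set circle) W \<and> W \<noteq> {} \<longrightarrow> D p \<inter> W \<noteq> {}))
    \<and> (\<forall>p \<in> L\<times>L. \<forall>q \<in> L\<times>L. \<forall>x. x \<in> D p \<and> x \<in> D q \<longrightarrow> p = q)" ..
  note D0 = conjunct1[OF DD] and D3 = conjunct2[OF DD]
  have D: "\<And>p. p \<in> L\<times>L \<Longrightarrow> D p \<subseteq> circle"
    "\<And>p W. p \<in> L\<times>L \<Longrightarrow> openin (top_of_set circle) W \<Longrightarrow> W \<noteq> {} \<Longrightarrow> D p \<inter> W \<noteq> {}"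
    "\<And>p q x. p \<in> L\<times>L \<Longrightarrow> q \<in> L\<times>L \<Longrightarrow> x \<in> D p \<Longrightarrow> x \<in> D q \<Longrightarrow> p = q"
    using D0 D3 by blast+
  define A where "A = {Some (a,x,b) | a x b. a \<in> L \<and> b \<in> L \<and> x \<in> D (a,b)}"
  have AC: "A \<subseteq> brandt_carrier L" using D(1) unfolding A_def brandt_carrier_def by auto
  have cl: "brandt_topology L closure_of A = brandt_carrier L"
  proof
    show "brandt_topology L closure_of A \<subseteq> brandt_carrier L"
      using closure_of_subset_topspace topspace_bt by metis
    show "brandt_carrier L \<subseteq> brandt_topology L closure_of A"
    proof
      fix p assume pC: "p \<in> brandt_carrier L"
      have "\<exists>y \<in> A. y \<in> T" if T: "p \<in> T" "openin (brandt_topology L) T" for T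
      proof (cases p)
        case None
        then obtain F S where FS: "finite F" "F \<subseteq> L\<times>L" "finite S" "S \<subseteq> circle" "Zs L F S \<subseteq> T"
          using open_nbhd[OF T(2) T(1)] by blast
        have "infinite (L \<times> L)" using infL infinite_cartesian_product by blast
        then obtain a b where ab: "(a,b) \<in> L\<times>L" "(a,b) \<notin> F" using FS(1)
          by (metis finite_subset subrelI)
        have "circle - S \<noteq> {}" using infinite_circle FS(3) by (metis Diff_eq_empty_iff finite_subset)
        then obtain x where x: "x \<in> D (a,b)" "x \<in> circle - S" using D(2)[OF ab(1) open_circle_diff[OF FS(3)]] by blast
        have "Some (a,x,b) \<in> A" using x ab unfolding A_def by auto
        moreover have "Some (a,x,b) \<in> Zs L F S" using x ab unfolding Zs_def brandt_carrier_def by auto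
        ultimately show ?thesis using FS(5) by blast
      next
        case (Some t)
        then obtain a y b where pt: "p = Some (a,y,b)" by (metis prod_cases3)
        then have ab: "a \<in> L" "b \<in> L" using pC unfolding brandt_carrier_def by auto
        obtain W where W: "openin (top_of_set circle) W" "y \<in> W" "cellset a b W \<subseteq> T"
          using open_nbhd[OF T(2) T(1)] pt by blast
        then obtain x where "x \<in> D (a,b)" "x \<in> W" using D(2)[of "(a,b)" W] ab by blast
        then have "Some (a,x,b) \<in> A" "Some (a,x,b) \<in> T" using ab W(3) unfolding A_def cellset_def by auto
        then show ?thesis by blast
      qed
      then show "p \<in> brandt_topology L closure_of A"
        unfolding closure_of_def topspace_bt using pC by blast
    qed
  qed
  have acc: "\<exists>x \<in> brandt_carrier L. x \<in> brandt_topology L derived_set_of B" if B: "B \<subseteq> A" "infinite B" for B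
  proof (cases "\<exists>a b. infinite {x. Some (a,x,b) \<in> B}")
    case True
    then obtain a b where R: "infinite {x. Some (a,x,b) \<in> B}" by blast
    define R where "R = {x. Some (a,x,b) \<in> B}"
    obtain x0 where "Some (a,x0,b) \<in> B" using R by (metis (no_types, lifting) Collect_empty_eq finite.emptyI)
    then have ab: "a \<in> L" "b \<in> L" using B unfolding A_def by auto
    have Rc: "R \<subseteq> circle" using B D(1) unfolding R_def A_def by auto
    obtain y where y: "y \<in> circle" "y islimpt R"
      using Heine_Borel_imp_Bolzano_Weierstrass[of circle R] R Rc unfolding R_def circle_def by auto
    have pC: "Some (a,y,b) \<in> brandt_carrier L" using ab y unfolding brandt_carrier_def by auto
    have "Some (a,y,b) \<in> brandt_topology L derived_set_of B"
      unfolding derived_set_of_def topspace_bt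
    proof (intro CollectI conjI allI impI pC)
      fix T assume T: "Some (a,y,b) \<in> T \<and> openin (brandt_topology L) T"
      obtain W where W: "openin (top_of_set circle) W" "y \<in> W" "cellset a b W \<subseteq> T"
        using open_nbhd[of L T "Some (a,y,b)"] T by blast
      obtain V where V: "open V" "W = circle \<inter> V" using W(1) by (auto simp: openin_open)
      obtain x where x: "x \<in> R" "x \<in> V" "x \<noteq> y" using y(2) V W(2) unfolding islimpt_def by blast
      have "Some (a,x,b) \<in> T" using x Rc V W(3) unfolding cellset_def by blast
      moreover have "Some (a,x,b) \<in> B" using x unfolding R_def by auto
      ultimately show "\<exists>q. q \<noteq> Some (a,y,b) \<and> q \<in> B \<and> q \<in> T" using x(3) by blast
    qed
    then show ?thesis using pC by blast
  next
    case False
    then have rows: "finite {x. Some (a,x,b) \<in> B}" for a b by blast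
    have NC: "None \<in> brandt_carrier L" by (simp add: brandt_carrier_def)
    have "None \<in> brandt_topology L derived_set_of B"
      unfolding derived_set_of_def topspace_bt
    proof (intro CollectI conjI allI impI NC)
      fix T assume T: "None \<in> T \<and> openin (brandt_topology L) T"
      obtain F S where FS: "finite F" "F \<subseteq> L\<times>L" "finite S" "S \<subseteq> circle" "Zs L F S \<subseteq> T"
        using open_nbhd[of L T None] T by blast
      define B1 where "B1 = B \<inter> {Some (a,x,b) | a x b. (a,b) \<in> F}"
      define B2 where "B2 = B \<inter> {Some (a,x,b) | a x b. x \<in> S}"
      have "B1 \<subseteq> (\<Union>(a,b) \<in> F. (\<lambda>x. Some (a,x,b)) ` {x. Some (a,x,b) \<in> B})"
        unfolding B1_def by auto
      moreover have "finite (\<Union>(a,b) \<in> F. (\<lambda>x. Some (a,x,b)) ` {x. Some (a,x,b) \<in> B})"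
        using FS(1) rows by auto
      ultimately have fB1: "finite B1" using finite_subset by blast
      define pr where "pr q = (case q of Some (a,x,b) \<Rightarrow> x | None \<Rightarrow> 0)" for q :: "('l \<times> complex \<times> 'l) option"
      have "inj_on pr B2"
      proof (rule inj_onI)
        fix q q' assume q: "q \<in> B2" "q' \<in> B2" "pr q = pr q'"
        then obtain a x b a' x' b' where qq: "q = Some (a,x,b)" "q' = Some (a',x',b')"
          "a \<in> L" "b \<in> L" "x \<in> D (a,b)" "a' \<in> L" "b' \<in> L" "x' \<in> D (a',b')"
          using B(1) unfolding B2_def A_def by blast
        then have "x = x'" using q(3) unfolding pr_def by simp
        then have "(a,b) = (a',b')" using D(3)[of "(a,b)" "(a',b')" x] qq by auto
        then show "q = q'" using qq \<open>x = x'\<close> by simp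
      qed
      moreover have "pr ` B2 \<subseteq> S" unfolding B2_def pr_def by auto
      ultimately have fB2: "finite B2" using FS(3) inj_on_finite by blast
      have "infinite (B - B1 - B2)" using B(2) fB1 fB2 by (metis Diff_Un finite_Diff2 finite_Un)
      then obtain q where q: "q \<in> B" "q \<notin> B1" "q \<notin> B2" by (metis DiffE ex_in_conv finite.emptyI)
      then obtain a x b where qq: "q = Some (a,x,b)" "a \<in> L" "b \<in> L" "x \<in> D (a,b)"
        using B(1) unfolding A_def by blast
      have "x \<in> circle" using D(1) qq by auto
      then have "q \<in> Zs L F S" using q qq unfolding B1_def B2_def Zs_def brandt_carrier_def by auto
      then show "\<exists>y. y \<noteq> None \<and> y \<in> B \<and> y \<in> T" using q(1) qq(1) FS(5) by blast
    qed
    then show ?thesis using NC by blast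
  qed
  show ?thesis unfolding countably_pracompact_def topspace_bt using AC cl acc by blast
qed

theorem proposition2p14:
  fixes L :: "'l set"
  assumes "infinite L"
  shows "countably_pracompact (brandt_topology L) \<longleftrightarrow> (\<exists>f :: 'l \<Rightarrow> real. inj_on f L)"
  using forward backward assms by blast

end
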